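(* Let $G$ be a graph with $\lambda_3(G)=k\ge 2$ and let $S=\{x,y,z\}\subseteq V(G)$ be a set of three distinct vertices. Then there exist $k$ pairwise edge-disjoint $S$-trees $T_1,\dots,T_k$ in $G$ such that $E(T_i)\cap E(G[S])=\emptyset$ for all $i\ge 3$ (i.e., at least $k-2$ of them use no edge of the induced subgraph $G[S]$).
   Context: For a graph $G$ and $S\subseteq V(G)$ with $|S|\ge 2$, an $S$-tree is a subgraph of $G$ that is a tree containing all vertices of $S$; $\lambda(S)$ is the maximum number of pairwise edge-disjoint $S$-trees, and $\lambda_3(G)=\min\{\lambda(S): |S|=3\}$. $G[S]$ denotes the subgraph induced by $S$. *)

theory Defs
  imports Main
begin

definition simple_graph :: "'a set \<Rightarrow> 'a set set \<Rightarrow> bool" where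
  "simple_graph V E \<longleftrightarrow> finite V \<and>
     (\<forall>e\<in>E. \<exists>u v. u \<noteq> v \<and> u \<in> V \<and> v \<in> V \<and> e = {u, v})"

definition is_subgraph :: "'a set \<Rightarrow> 'a set set \<Rightarrow> 'a set \<Rightarrow> 'a set set \<Rightarrow> bool" where
  "is_subgraph VT ET V E \<longleftrightarrow> VT \<subseteq> V \<and> ET \<subseteq> E \<and> (\<forall>e\<in>ET. e \<subseteq> VT)"

definition connected_graph :: "'a set \<Rightarrow> 'a set set \<Rightarrow> bool" where
  "connected_graph VT ET \<longleftrightarrow>
     (\<forall>u\<in>VT. \<forall>v\<in>VT. (\<lambda>a b. {a, b} \<in> ET)\<^sup>*\<^sup>* u v)"

definition is_cycle :: "'a set set \<Rightarrow> 'a list \<Rightarrow> bool" where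
  "is_cycle ET vs \<longleftrightarrow> length vs \<ge> 3 \<and> distinct vs \<and>
     (\<forall>i. i + 1 < length vs \<longrightarrow> {vs ! i, vs ! (i + 1)} \<in> ET) \<and>
     {last vs, hd vs} \<in> ET"

definition acyclic_graph :: "'a set set \<Rightarrow> bool" where
  "acyclic_graph ET \<longleftrightarrow> \<not> (\<exists>vs. is_cycle ET vs)"

definition is_tree :: "'a set \<Rightarrow> 'a set set \<Rightarrow> bool" where
  "is_tree VT ET \<longleftrightarrow> VT \<noteq> {} \<and> connected_graph VT ET \<and> acyclic_graph ET"

definition S_tree :: "'a set \<Rightarrow> 'a set set \<Rightarrow> 'a set \<Rightarrow> 'a set \<times> 'a set set \<Rightarrow> bool" where
  "S_tree V E S T \<longleftrightarrow> is_subgraph (fst T) (snd T) V E \<and> is_tree (fst T) (snd T) \<and> S \<subseteq> fst T"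

definition edge_disjoint_S_trees ::
  "'a set \<Rightarrow> 'a set set \<Rightarrow> 'a set \<Rightarrow> nat \<Rightarrow> (nat \<Rightarrow> 'a set \<times> 'a set set) \<Rightarrow> bool" where
  "edge_disjoint_S_trees V E S k T \<longleftrightarrow>
     (\<forall>i<k. S_tree V E S (T i)) \<and>
     (\<forall>i<k. \<forall>j<k. i \<noteq> j \<longrightarrow> snd (T i) \<inter> snd (T j) = {})"

definition lambda_S :: "'a set \<Rightarrow> 'a set set \<Rightarrow> 'a set \<Rightarrow> nat" where
  "lambda_S V E S = Max {k. \<exists>T. edge_disjoint_S_trees V E S k T}"

definition lambda3 :: "'a set \<Rightarrow> 'a set set \<Rightarrow> nat" where
  "lambda3 V E = Min {lambda_S V E S | S. S \<subseteq> V \<and> card S = 3}"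

definition induced_edges :: "'a set set \<Rightarrow> 'a set \<Rightarrow> 'a set set" where
  "induced_edges E S = {e \<in> E. e \<subseteq> S}"

end

theory Submission
  imports Defs
begin


abbreviation reach :: "'a set set \<Rightarrow> 'a \<Rightarrow> 'a \<Rightarrow> bool" where
  "reach F \<equiv> (\<lambda>a b. {a, b} \<in> F)\<^sup>*\<^sup>*"

lemma reach_mono:
  assumes "reach A u v" "A \<subseteq> B" shows "reach B u v"
  using assms(1)
proof (induction rule: rtranclp_induct)
  case base then show ?case by simp
next
  case (step y z)
  then have "{y, z} \<in> B" using assms(2) by blast
  with step.IH show ?case by (rule rtranclp.rtrancl_into_rtrancl)
qed

lemma reach_sym: "reach A u v \<Longrightarrow> reach A v u"
proof (induction rule: rtranclp_induct)
  case base then show ?case by simp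
next
  case (step y z)
  then have "{z, y} \<in> A" by (simp add: insert_commute)
  then show ?case using step.IH by (rule converse_rtranclp_into_rtranclp)
qed

lemma reach_edge: "{u, v} \<in> A \<Longrightarrow> reach A u v"
  by (rule r_into_rtranclp)

lemma reach_trans: "reach A u v \<Longrightarrow> reach A v w \<Longrightarrow> reach A u w"
  by (rule rtranclp_trans)

lemma reach_avoid:
  assumes "reach F s v" "\<not> reach F s w" "w \<in> e"
  shows "reach (F - {e}) s v"
  using assms(1)
proof (induction rule: rtranclp_induct)
  case base then show ?case by simp
next
  case (step y z)
  have "reach F s z" using step.hyps by (rule rtranclp.rtrancl_into_rtrancl)
  have "{y, z} \<noteq> e"
  proof
    assume "{y, z} = e"
    then have "w = y \<or> w = z" using assms(3) by auto
    then show False using assms(2) step.hyps(1) \<open>reach F s z\<close> by auto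
  qed
  then have "{y, z} \<in> F - {e}" using step.hyps(2) by simp
  with step.IH show ?case by (rule rtranclp.rtrancl_into_rtrancl)
qed

lemma reach_reroute:
  assumes "reach (F - {e}) p q" "e = {p, q}" "reach F a b"
  shows "reach (F - {e}) a b"
  using assms(3)
proof (induction rule: rtranclp_induct)
  case base then show ?case by simp
next
  case (step y z)
  show ?case
  proof (cases "{y, z} = e")
    case True
    then have "(y = p \<and> z = q) \<or> (y = q \<and> z = p)" using assms(2) by (simp add: doubleton_eq_iff)
    then have "reach (F - {e}) y z"
    proof
      assume "y = p \<and> z = q" then show ?thesis using assms(1) by simp
    next
      assume "y = q \<and> z = p" then show ?thesis using reach_sym[OF assms(1)] by simp
    qed
    then show ?thesis by (rule rtranclp_trans[OF step.IH])
  next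
    case False
    then have "{y, z} \<in> F - {e}" using step.hyps(2) by simp
    with step.IH show ?thesis by (rule rtranclp.rtrancl_into_rtrancl)
  qed
qed

lemma cycle_path:
  assumes "is_cycle F vs"
  shows "reach (F - {{last vs, hd vs}}) (hd vs) (last vs)"
proof -
  let ?n = "length vs"
  let ?e = "{last vs, hd vs}"
  have n3: "?n \<ge> 3" and d: "distinct vs" and ed: "\<And>i. i + 1 < ?n \<Longrightarrow> {vs ! i, vs ! (i+1)} \<in> F"
    using assms unfolding is_cycle_def by auto
  have ne: "vs \<noteq> []" using n3 by auto
  have l: "last vs = vs ! (?n - 1)" using ne by (simp add: last_conv_nth)
  have h: "hd vs = vs ! 0" using ne by (simp add: hd_conv_nth)
  have "i < ?n \<Longrightarrow> reach (F - {?e}) (vs ! 0) (vs ! i)" for i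
  proof (induction i)
    case 0 then show ?case by simp
  next
    case (Suc i)
    have i1: "i + 1 < ?n" using Suc.prems by simp
    have e1: "{vs ! i, vs ! (i+1)} \<in> F" using i1 ed by blast
    have "{vs ! i, vs ! (i+1)} \<noteq> ?e"
    proof
      assume eq: "{vs ! i, vs ! (i+1)} = ?e"
      have "?e = {vs ! (?n - 1), vs ! 0}" using l h by simp
      then have "(vs ! i = vs ! (?n - 1) \<and> vs ! (i+1) = vs ! 0) \<or> (vs ! i = vs ! 0 \<and> vs ! (i+1) = vs ! (?n - 1))"
        using eq doubleton_eq_iff by metis
      then show False
      proof
        assume "vs ! i = vs ! (?n - 1) \<and> vs ! (i+1) = vs ! 0"
        then have "i = ?n - 1" using nth_eq_iff_index_eq[OF d, of i "?n - 1"] i1 by simp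
        then show False using i1 by simp
      next
        assume a: "vs ! i = vs ! 0 \<and> vs ! (i+1) = vs ! (?n - 1)"
        then have "i = 0" using nth_eq_iff_index_eq[OF d, of i 0] i1 ne by simp
        moreover have "i + 1 = ?n - 1" using a nth_eq_iff_index_eq[OF d, of "i+1" "?n - 1"] i1 by simp
        ultimately show False using n3 by simp
      qed
    qed
    then have "{vs ! i, vs ! (i+1)} \<in> F - {?e}" using e1 by simp
    then have st: "reach (F - {?e}) (vs ! i) (vs ! Suc i)" by (simp add: r_into_rtranclp)
    have "reach (F - {?e}) (vs ! 0) (vs ! i)" using Suc.IH i1 by simp
    then show ?case using st by (rule rtranclp_trans)
  qed
  from this[of "?n - 1"] show ?thesis using n3 l h by simp
qed

lemma extract_tree:
  assumes fin: "finite ET"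
    and edges: "\<forall>e\<in>ET. \<exists>u v. u \<noteq> v \<and> u \<in> V \<and> v \<in> V \<and> e = {u, v}"
    and SV: "S \<subseteq> V" and Sne: "S \<noteq> {}"
    and conn: "\<forall>u\<in>S. \<forall>v\<in>S. reach ET u v"
  shows "\<exists>VT F. F \<subseteq> ET \<and> VT \<subseteq> V \<and> S \<subseteq> VT \<and> (\<forall>e\<in>F. e \<subseteq> VT) \<and> is_tree VT F"
proof -
  define P where "P F \<longleftrightarrow> F \<subseteq> ET \<and> (\<forall>u\<in>S. \<forall>v\<in>S. reach F u v)" for F
  have "P ET" using conn by (simp add: P_def)
  then obtain F where PF: "P F" and min: "\<forall>G. P G \<longrightarrow> card F \<le> card G"
    using ex_has_least_nat[of P ET card] by blast
  have FE: "F \<subseteq> ET" using PF by (simp add: P_def)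
  have finF: "finite F" using FE fin finite_subset by blast
  have Fconn: "\<forall>u\<in>S. \<forall>v\<in>S. reach F u v" using PF by (simp add: P_def)
  have key: "\<not> (\<forall>u\<in>S. \<forall>v\<in>S. reach (F - {e}) u v)" if "e \<in> F" for e
  proof
    assume "\<forall>u\<in>S. \<forall>v\<in>S. reach (F - {e}) u v"
    then have "P (F - {e})" using FE by (auto simp: P_def)
    then have "card F \<le> card (F - {e})" using min by blast
    moreover have "card (F - {e}) < card F" using finF that by (rule card_Diff1_less)
    ultimately show False by simp
  qed
  obtain s0 where s0: "s0 \<in> S" using Sne by blast
  define VT where "VT = S \<union> \<Union>F"
  have allr: "reach F s0 w" if wV: "w \<in> VT" for w
  proof (cases "w \<in> S")
    case True then show ?thesis using Fconn s0 by simp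
  next
    case False
    then obtain e where e: "e \<in> F" "w \<in> e" using wV VT_def by blast
    show ?thesis
    proof (rule ccontr)
      assume nr: "\<not> reach F s0 w"
      have "\<forall>u\<in>S. \<forall>v\<in>S. reach (F - {e}) u v"
      proof (intro ballI)
        fix u v assume "u \<in> S" "v \<in> S"
        then have a1: "reach F s0 u" and a2: "reach F s0 v" using Fconn s0 by auto
        have b1: "reach (F - {e}) s0 u" by (rule reach_avoid[OF a1 nr e(2)])
        have b2: "reach (F - {e}) s0 v" by (rule reach_avoid[OF a2 nr e(2)])
        show "reach (F - {e}) u v" by (rule reach_trans[OF reach_sym[OF b1] b2])
      qed
      then show False using key e(1) by blast
    qed
  qed
  have "connected_graph VT F"
    unfolding connected_graph_def
  proof (intro ballI)
    fix u v assume "u \<in> VT" "v \<in> VT"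
    then have b1: "reach F s0 u" and b2: "reach F s0 v" using allr by auto
    show "reach F u v" by (rule reach_trans[OF reach_sym[OF b1] b2])
  qed
  moreover have "acyclic_graph F"
    unfolding acyclic_graph_def
  proof
    assume "\<exists>vs. is_cycle F vs"
    then obtain vs where c: "is_cycle F vs" by blast
    let ?e = "{last vs, hd vs}"
    have eF: "?e \<in> F" using c by (simp add: is_cycle_def)
    have p: "reach (F - {?e}) (hd vs) (last vs)" using cycle_path[OF c] .
    have "reach (F - {?e}) u v" if "u \<in> S" "v \<in> S" for u v
    proof -
      have "reach F u v" using Fconn that by simp
      then show ?thesis by (rule reach_reroute[OF p insert_commute])
    qed
    then show False using key[OF eF] by blast
  qed
  moreover have "VT \<noteq> {}" using Sne VT_def by blast
  moreover have "VT \<subseteq> V"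
  proof -
    have "\<Union>F \<subseteq> V" using FE edges by fastforce
    then show ?thesis using SV VT_def by blast
  qed
  moreover have "\<forall>e\<in>F. e \<subseteq> VT" using VT_def by blast
  ultimately have "is_tree VT F" "VT \<subseteq> V" "\<forall>e\<in>F. e \<subseteq> VT" unfolding is_tree_def by auto
  moreover have "S \<subseteq> VT" unfolding VT_def by blast
  ultimately show ?thesis using FE by blast
qed



lemma tree_split:
  assumes "reach ET u w" "e = {u, v}"
  shows "reach (ET - {e}) u w \<or> reach (ET - {e}) v w"
  using assms(1)
proof (induction rule: rtranclp_induct)
  case base then show ?case by simp
next
  case (step y z)
  show ?case
  proof (cases "{y, z} = e")
    case True
    then have "z = u \<or> z = v" using assms(2) by blast
    then show ?thesis
    proof
      assume "z = u" then show ?thesis by simp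
    next
      assume "z = v" then show ?thesis by simp
    qed
  next
    case False
    then have ed: "{y, z} \<in> ET - {e}" using step.hyps(2) by simp
    from step.IH show ?thesis
    proof
      assume "reach (ET - {e}) u y"
      from this ed have "reach (ET - {e}) u z" by (rule rtranclp.rtrancl_into_rtrancl)
      then show ?thesis by (rule disjI1)
    next
      assume "reach (ET - {e}) v y"
      from this ed have "reach (ET - {e}) v z" by (rule rtranclp.rtrancl_into_rtrancl)
      then show ?thesis by (rule disjI2)
    qed
  qed
qed

lemma third:
  assumes tree: "S_tree V E {x, y, z} T" and eT: "e \<in> snd T" and ep: "e = {p, q}"
    and pq: "p \<noteq> q" "p \<in> {x, y, z}" "q \<in> {x, y, z}"
    and dist: "x \<noteq> y" "x \<noteq> z" "y \<noteq> z"
  shows "\<exists>p' q'. p' \<noteq> q' \<and> p' \<in> {x, y, z} \<and> q' \<in> {x, y, z} \<and> {p', q'} \<noteq> e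
           \<and> reach (snd T - {e}) p' q'"
proof -
  have "\<exists>r\<in>{x, y, z}. r \<noteq> p \<and> r \<noteq> q" using pq dist by auto
  then obtain r where r: "r \<in> {x, y, z}" "r \<noteq> p" "r \<noteq> q" by blast
  have Ssub: "{x, y, z} \<subseteq> fst T" and conn: "connected_graph (fst T) (snd T)"
    using tree unfolding S_tree_def is_tree_def by auto
  have "p \<in> fst T" "r \<in> fst T" using Ssub pq r by auto
  then have "reach (snd T) p r" using conn unfolding connected_graph_def by simp
  then have "reach (snd T - {e}) p r \<or> reach (snd T - {e}) q r" by (rule tree_split[OF _ ep])
  moreover have n1: "{p, r} \<noteq> e" using ep r by (simp add: doubleton_eq_iff)
  moreover have n2: "{q, r} \<noteq> e" using ep r by (simp add: doubleton_eq_iff)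
  ultimately show ?thesis
  proof (elim disjE)
    assume "reach (snd T - {e}) p r"
    then show ?thesis using r pq n1 by (intro exI[of _ p] exI[of _ r]) simp
  next
    assume "reach (snd T - {e}) q r"
    then show ?thesis using r pq n2 by (intro exI[of _ q] exI[of _ r]) simp
  qed
qed

lemma pairs_conn:
  fixes Q :: "'a \<Rightarrow> 'a \<Rightarrow> bool"
  assumes rf: "\<And>a. Q a a" and sy: "\<And>a b. Q a b \<Longrightarrow> Q b a" and tr: "\<And>a b c. Q a b \<Longrightarrow> Q b c \<Longrightarrow> Q a c"
    and d: "p1 \<noteq> q1" "p2 \<noteq> q2" "{p1, q1} \<noteq> {p2, q2}"
    and m: "p1 \<in> {x, y, z}" "q1 \<in> {x, y, z}" "p2 \<in> {x, y, z}" "q2 \<in> {x, y, z}"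
    and q: "Q p1 q1" "Q p2 q2"
  shows "\<forall>u\<in>{x, y, z}. \<forall>v\<in>{x, y, z}. Q u v"
proof -
  have all: "Q p1 w" if w: "w \<in> {x, y, z}" for w
  proof -
    have "w = p1 \<or> w = q1 \<or> (w = p2 \<and> (q2 = p1 \<or> q2 = q1)) \<or> (w = q2 \<and> (p2 = p1 \<or> p2 = q1))"
      using d m w by (simp add: doubleton_eq_iff) blast
    then show ?thesis
    proof (elim disjE conjE)
      assume "w = p1" then show ?thesis using rf by simp
    next
      assume "w = q1" then show ?thesis using q(1) by simp
    next
      assume "w = p2" "q2 = p1" then show ?thesis using sy[OF q(2)] by simp
    next
      assume a: "w = p2" "q2 = q1"
      have "Q q1 p2" using sy[OF q(2)] a by simp
      then show ?thesis using tr[OF q(1)] a by simp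
    next
      assume "w = q2" "p2 = p1" then show ?thesis using q(2) by simp
    next
      assume a: "w = q2" "p2 = q1"
      have "Q q1 q2" using q(2) a by simp
      then show ?thesis using tr[OF q(1)] a by simp
    qed
  qed
  show ?thesis
  proof (intro ballI)
    fix u v assume "u \<in> {x, y, z}" "v \<in> {x, y, z}"
    then have "Q p1 u" "Q p1 v" using all by auto
    then show "Q u v" using tr[OF sy] by blast
  qed
qed

lemma ed_mono: "edge_disjoint_S_trees V E S n T \<Longrightarrow> m \<le> n \<Longrightarrow> edge_disjoint_S_trees V E S m T"
  unfolding edge_disjoint_S_trees_def by auto

lemma ed_bound:
  assumes ed: "edge_disjoint_S_trees V E S n T" and finE: "finite E"
    and s: "s1 \<in> S" "s2 \<in> S" "s1 \<noteq> s2"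
  shows "n \<le> card E"
proof -
  have ne: "snd (T i) \<noteq> {}" if "i < n" for i
  proof
    assume em: "snd (T i) = {}"
    have "S_tree V E S (T i)" using ed that unfolding edge_disjoint_S_trees_def by blast
    then have "reach (snd (T i)) s1 s2" using s
      unfolding S_tree_def is_tree_def connected_graph_def by blast
    then have "reach {} s1 s2" using em by simp
    then show False using s(3) by (cases rule: converse_rtranclpE) auto
  qed
  have sub: "snd (T i) \<subseteq> E" if "i < n" for i
    using ed that unfolding edge_disjoint_S_trees_def S_tree_def is_subgraph_def by blast
  have fin: "finite (snd (T i))" if "i < n" for i using sub[OF that] finE finite_subset by blast
  have "card (\<Union>i\<in>{..<n}. snd (T i)) = (\<Sum>i\<in>{..<n}. card (snd (T i)))"
    by (rule card_UN_disjoint) (use fin ed in \<open>auto simp: edge_disjoint_S_trees_def\<close>)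
  moreover have "(\<Sum>i\<in>{..<n}. card (snd (T i))) \<ge> (\<Sum>i\<in>{..<n}. 1)"
    by (rule sum_mono) (use ne fin in \<open>auto simp: Suc_le_eq card_gt_0_iff\<close>)
  moreover have "card (\<Union>i\<in>{..<n}. snd (T i)) \<le> card E"
    by (rule card_mono[OF finE]) (use sub in blast)
  ultimately show ?thesis by simp
qed

lemma reorder:
  assumes ed: "edge_disjoint_S_trees V E S k T" and c: "card {i. i < k \<and> snd (T i) \<inter> I \<noteq> {}} \<le> 2"
  shows "\<exists>T'. edge_disjoint_S_trees V E S k T' \<and> (\<forall>i. 2 \<le> i \<and> i < k \<longrightarrow> snd (T' i) \<inter> I = {})"
proof -
  define N where "N = {i. i < k \<and> snd (T i) \<inter> I \<noteq> {}}"
  define R where "R = {..<k} - N"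
  define L where "L = sorted_list_of_set N @ sorted_list_of_set R"
  have Nk: "N \<subseteq> {..<k}" unfolding N_def by auto
  have finN: "finite N" using Nk finite_subset by blast
  have finR: "finite R" unfolding R_def by simp
  have dL: "distinct L" unfolding L_def using finN finR by (auto simp: R_def)
  have sL: "set L = {..<k}" unfolding L_def using finN finR Nk by (auto simp: R_def)
  have lenL: "length L = k" using distinct_card[OF dL] sL by simp
  define T' where "T' i = T (L ! i)" for i
  have Lk: "L ! i < k" if "i < k" for i using sL lenL that nth_mem by fastforce
  have "edge_disjoint_S_trees V E S k T'"
    unfolding edge_disjoint_S_trees_def T'_def
  proof (intro conjI allI impI)
    fix i assume "i < k" then show "S_tree V E S (T (L ! i))" using ed Lk unfolding edge_disjoint_S_trees_def by blast
  next
    fix i j assume "i < k" "j < k" "i \<noteq> j"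
    then have "L ! i \<noteq> L ! j" using nth_eq_iff_index_eq[OF dL] lenL by simp
    then show "snd (T (L ! i)) \<inter> snd (T (L ! j)) = {}" using ed Lk \<open>i < k\<close> \<open>j < k\<close>
      unfolding edge_disjoint_S_trees_def by blast
  qed
  moreover have "snd (T' i) \<inter> I = {}" if "2 \<le> i" "i < k" for i
  proof -
    have cN: "length (sorted_list_of_set N) = card N" by simp
    have cNi: "card N \<le> i" using c that N_def by simp
    then have "L ! i = sorted_list_of_set R ! (i - card N)" unfolding L_def by (simp add: nth_append)
    moreover have "i - card N < length (sorted_list_of_set R)"
      using lenL that cNi unfolding L_def by simp
    ultimately have "L ! i \<in> R" using finR by (metis nth_mem set_sorted_list_of_set)
    then show ?thesis unfolding T'_def R_def N_def by auto
  qed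
  ultimately show ?thesis by blast
qed



lemma I_form:
  assumes "simple_graph V E" "e \<in> induced_edges E S"
  shows "\<exists>p q. p \<noteq> q \<and> p \<in> S \<and> q \<in> S \<and> e = {p, q}"
proof -
  have "e \<in> E" "e \<subseteq> S" using assms(2) unfolding induced_edges_def by auto
  then obtain p q where "p \<noteq> q" "e = {p, q}" using assms(1) unfolding simple_graph_def by blast
  then show ?thesis using \<open>e \<subseteq> S\<close> by blast
qed

lemma pair_in_tri:
  assumes "p \<noteq> q" "p \<in> {x, y, z}" "q \<in> {x, y, z}"
  shows "{p, q} \<in> {{x, y}, {y, z}, {x, z}}"
  using assms by (auto simp: insert_commute)

lemma card_tri: "card {A, B, C :: 'b set} \<le> 3"
  by (simp add: card_insert_if)

theorem proposition2p1:
  fixes V :: "'a set" and E :: "'a set set" and k :: nat and x y z :: 'a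
  assumes "simple_graph V E"
    and "lambda3 V E = k" and "k \<ge> 2"
    and "x \<in> V" and "y \<in> V" and "z \<in> V"
    and "x \<noteq> y" and "x \<noteq> z" and "y \<noteq> z"
  shows "\<exists>T. edge_disjoint_S_trees V E {x, y, z} k T \<and>
           (\<forall>i. 2 \<le> i \<and> i < k \<longrightarrow> snd (T i) \<inter> induced_edges E {x, y, z} = {})"
proof -
  note sg = assms(1)
  note dist = assms(7-9)
  define S where "S = {x, y, z}"
  define I where "I = induced_edges E S"
  have finV: "finite V" and edgesE: "\<forall>e\<in>E. \<exists>u v. u \<noteq> v \<and> u \<in> V \<and> v \<in> V \<and> e = {u, v}"
    using sg unfolding simple_graph_def by simp_all
  have "E \<subseteq> Pow V"
  proof
    fix e assume "e \<in> E"
    then obtain u v where "u \<in> V" "v \<in> V" "e = {u, v}" using edgesE by blast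
    then show "e \<in> Pow V" by simp
  qed
  then have finE: "finite E" using finV finite_subset by blast
  have SV: "S \<subseteq> V" unfolding S_def using assms(4-6) by simp
  define K where "K = {n. \<exists>T. edge_disjoint_S_trees V E S n T}"
  have "K \<subseteq> {..card E}"
  proof
    fix n assume "n \<in> K"
    then obtain T where "edge_disjoint_S_trees V E S n T" unfolding K_def by blast
    then have "n \<le> card E" using ed_bound[of V E S n T x y] finE dist S_def by simp
    then show "n \<in> {..card E}" by simp
  qed
  then have finK: "finite K" using finite_subset by blast
  have "0 \<in> K" unfolding K_def edge_disjoint_S_trees_def by simp
  then have lamK: "lambda_S V E S \<in> K" unfolding lambda_S_def K_def[symmetric]
    using finK by (intro Max_in) auto
  have fin3: "finite {lambda_S V E S' | S'. S' \<subseteq> V \<and> card S' = 3}"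
  proof -
    have "{lambda_S V E S' | S'. S' \<subseteq> V \<and> card S' = 3} \<subseteq> lambda_S V E ` Pow V" by blast
    then show ?thesis using finV finite_subset by blast
  qed
  have "card S = 3" using dist S_def by simp
  then have "lambda_S V E S \<in> {lambda_S V E S' | S'. S' \<subseteq> V \<and> card S' = 3}" using SV by blast
  then have "k \<le> lambda_S V E S" using Min_le[OF fin3] assms(2) unfolding lambda3_def by blast
  then obtain T where ed: "edge_disjoint_S_trees V E S k T"
    using lamK ed_mono unfolding K_def by blast
  have trees: "\<And>i. i < k \<Longrightarrow> S_tree V E S (T i)" and disj: "\<And>i j. i < k \<Longrightarrow> j < k \<Longrightarrow> i \<noteq> j \<Longrightarrow> snd (T i) \<inter> snd (T j) = {}"
    using ed unfolding edge_disjoint_S_trees_def by auto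
  have subE: "\<And>i. i < k \<Longrightarrow> snd (T i) \<subseteq> E" using trees unfolding S_tree_def is_subgraph_def by blast
  define N where "N = {i. i < k \<and> snd (T i) \<inter> I \<noteq> {}}"
  have finN: "finite N" unfolding N_def by simp
  have goal: "\<exists>T'. edge_disjoint_S_trees V E S k T' \<and> card {i. i < k \<and> snd (T' i) \<inter> I \<noteq> {}} \<le> 2"
  proof (cases "card N \<le> 2")
    case True
    then have "card {i. i < k \<and> snd (T i) \<inter> I \<noteq> {}} \<le> 2" unfolding N_def .
    with ed show ?thesis by (intro exI[of _ T] conjI)
  next
    case False
    have "N \<noteq> {}" using False by (intro notI) simp
    then obtain a where a: "a \<in> N" by blast
    have c2: "card (N - {a}) \<ge> 2" using False a finN by simp
    have "N - {a} \<noteq> {}" using c2 by (intro notI) simp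
    then obtain b where b: "b \<in> N" "b \<noteq> a" by blast
    have c1: "card (N - {a} - {b}) \<ge> 1" using False a b finN by (simp add: card_Diff_singleton)
    have "N - {a} - {b} \<noteq> {}" using c1 by (intro notI) simp
    then obtain c where c: "c \<in> N" "c \<noteq> a" "c \<noteq> b" by blast
    define Tri where "Tri = {{x, y}, {y, z}, {x, z}}"
    have ITri: "I \<subseteq> Tri"
    proof
      fix e assume "e \<in> I"
      then obtain p q where "p \<noteq> q" "p \<in> S" "q \<in> S" "e = {p, q}" using I_form[OF sg] I_def by blast
      then show "e \<in> Tri" unfolding Tri_def using pair_in_tri S_def by blast
    qed
    have "\<forall>m\<in>N. \<exists>e. e \<in> snd (T m) \<inter> I" unfolding N_def by blast
    then obtain ee where ee: "\<forall>m\<in>N. ee m \<in> snd (T m) \<inter> I" using bchoice by metis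
    have Nk: "\<And>m. m \<in> N \<Longrightarrow> m < k" unfolding N_def by simp
    have eeT: "\<And>m. m \<in> N \<Longrightarrow> ee m \<in> snd (T m)" using ee by simp
    have eeI: "\<And>m. m \<in> N \<Longrightarrow> ee m \<in> I" using ee by simp
    have eeinj: "ee m \<noteq> ee m'" if "m \<in> N" "m' \<in> N" "m \<noteq> m'" for m m'
    proof
      assume eq: "ee m = ee m'"
      have "ee m \<in> snd (T m) \<inter> snd (T m')" using eeT[OF that(1)] eeT[OF that(2)] eq by simp
      then show False using disj[OF Nk[OF that(1)] Nk[OF that(2)] that(3)] by simp
    qed
    have dd: "ee a \<noteq> ee b" "ee a \<noteq> ee c" "ee b \<noteq> ee c"
      using eeinj[OF a b(1) b(2)[symmetric]] eeinj[OF a c(1) c(2)[symmetric]]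
        eeinj[OF b(1) c(1) c(3)[symmetric]] by simp_all
    have sub3: "{ee a, ee b, ee c} \<subseteq> Tri" using ee a b c ITri by blast
    have c3: "card {ee a, ee b, ee c} = 3" using dd by simp
    have cT: "card Tri \<le> 3" unfolding Tri_def by (rule card_tri)
    have finTri: "finite Tri" unfolding Tri_def by simp
    have eqTri: "{ee a, ee b, ee c} = Tri" using card_seteq[OF finTri sub3] c3 cT by simp
    have NA: "N \<subseteq> {a, b, c}"
    proof
      fix m assume m: "m \<in> N"
      have "ee m \<in> {ee a, ee b, ee c}" using ee m ITri eqTri by blast
      then show "m \<in> {a, b, c}" using eeinj m a b c by blast
    qed
    have one: "snd (T m) \<inter> I = {ee m}" if m: "m \<in> {a, b, c}" for m
    proof
      have mN: "m \<in> N" using m a b c by blast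
      show "snd (T m) \<inter> I \<subseteq> {ee m}"
      proof
        fix f assume f: "f \<in> snd (T m) \<inter> I"
        then have "f \<in> {ee a, ee b, ee c}" using ITri eqTri by blast
        then obtain m' where m': "m' \<in> {a, b, c}" "f = ee m'" by blast
        have "m' \<in> N" using m' a b c by blast
        then have "f \<in> snd (T m')" using ee m' by blast
        then have "m' = m" using disj[OF Nk[OF \<open>m' \<in> N\<close>] Nk[OF mN]] f by blast
        then show "f \<in> {ee m}" using m' by simp
      qed
      show "{ee m} \<subseteq> snd (T m) \<inter> I" using ee mN by blast
    qed
    have abcN: "{a, b, c} \<subseteq> N" using a b c by blast
    have eform: "\<exists>p q. p \<noteq> q \<and> p \<in> S \<and> q \<in> S \<and> ee m = {p, q}" if "m \<in> {a, b, c}" for m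
      using I_form[OF sg] ee abcN that I_def by blast
    define Good where "Good m p q \<longleftrightarrow> p \<noteq> q \<and> p \<in> S \<and> q \<in> S \<and> {p, q} \<noteq> ee m
           \<and> reach (snd (T m) - {ee m}) p q" for m p q
    have "\<forall>m\<in>{a, b, c}. \<exists>pq. Good m (fst pq) (snd pq)"
    proof
      fix m assume m: "m \<in> {a, b, c}"
      obtain p q where pq: "p \<noteq> q" "p \<in> S" "q \<in> S" "ee m = {p, q}" using eform[OF m] by blast
      have mk: "m < k" using Nk abcN m by blast
      have tr: "S_tree V E {x, y, z} (T m)" using trees[OF mk] unfolding S_def .
      have em: "ee m \<in> snd (T m)" using eeT abcN m by blast
      have "\<exists>p' q'. p' \<noteq> q' \<and> p' \<in> {x, y, z} \<and> q' \<in> {x, y, z} \<and> {p', q'} \<noteq> ee m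
           \<and> reach (snd (T m) - {ee m}) p' q'"
        by (rule third[OF tr em pq(4) pq(1) _ _ dist]) (use pq(2,3) in \<open>simp_all add: S_def\<close>)
      then obtain p' q' where "Good m p' q'" unfolding Good_def S_def by blast
      then show "\<exists>pq. Good m (fst pq) (snd pq)" by (intro exI[of _ "(p', q')"]) simp
    qed
    from bchoice[OF this] obtain g where g: "\<forall>m\<in>{a, b, c}. Good m (fst (g m)) (snd (g m))" ..
    define P1 where "P1 m = fst (g m)" for m
    define Q1 where "Q1 m = snd (g m)" for m
    have PQ: "\<forall>m\<in>{a, b, c}. P1 m \<noteq> Q1 m \<and> P1 m \<in> S \<and> Q1 m \<in> S \<and> {P1 m, Q1 m} \<noteq> ee m
           \<and> reach (snd (T m) - {ee m}) (P1 m) (Q1 m)"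
      using g unfolding Good_def P1_def Q1_def by simp
    define D where "D m = {P1 m, Q1 m}" for m
    have DTri: "D m \<in> Tri" if "m \<in> {a, b, c}" for m
    proof -
      have "P1 m \<noteq> Q1 m" "P1 m \<in> {x, y, z}" "Q1 m \<in> {x, y, z}" using PQ that unfolding S_def by auto
      then show ?thesis unfolding D_def Tri_def by (rule pair_in_tri)
    qed
    have "\<exists>i j. i \<in> {a, b, c} \<and> j \<in> {a, b, c} \<and> i \<noteq> j \<and> D i \<noteq> D j"
    proof (rule ccontr)
      assume "\<not> ?thesis"
      then have e1: "D a = D b" "D a = D c" using b c by blast+
      have "D a \<in> {ee a, ee b, ee c}" using DTri eqTri by blast
      moreover have "D a \<noteq> ee a" "D b \<noteq> ee b" "D c \<noteq> ee c" using PQ unfolding D_def by blast+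
      ultimately show False using e1 by auto
    qed
    then obtain i j where ij: "i \<in> {a, b, c}" "j \<in> {a, b, c}" "i \<noteq> j" "D i \<noteq> D j" by blast
    have ik: "i < k" and jk: "j < k" using ij abcN Nk by blast+
    define F where "F = (snd (T i) - {ee i}) \<union> (snd (T j) - {ee j})"
    have Fsub: "F \<subseteq> E" unfolding F_def using subE ik jk by blast
    have FI: "F \<inter> I = {}" unfolding F_def using one[OF ij(1)] one[OF ij(2)] by blast
    have PQi: "P1 i \<noteq> Q1 i \<and> P1 i \<in> S \<and> Q1 i \<in> S \<and> {P1 i, Q1 i} \<noteq> ee i
           \<and> reach (snd (T i) - {ee i}) (P1 i) (Q1 i)" using PQ ij(1) by blast
    have PQj: "P1 j \<noteq> Q1 j \<and> P1 j \<in> S \<and> Q1 j \<in> S \<and> {P1 j, Q1 j} \<noteq> ee j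
           \<and> reach (snd (T j) - {ee j}) (P1 j) (Q1 j)" using PQ ij(2) by blast
    have "\<forall>u\<in>{x, y, z}. \<forall>v\<in>{x, y, z}. reach F u v"
    proof (rule pairs_conn[of "reach F" "P1 i" "Q1 i" "P1 j" "Q1 j" x y z])
      show "\<And>a. reach F a a" by simp
      show "\<And>a b. reach F a b \<Longrightarrow> reach F b a" by (rule reach_sym)
      show "\<And>a b c. reach F a b \<Longrightarrow> reach F b c \<Longrightarrow> reach F a c" by (rule reach_trans)
      show "P1 i \<noteq> Q1 i" "P1 j \<noteq> Q1 j" using PQi PQj by simp_all
      show "{P1 i, Q1 i} \<noteq> {P1 j, Q1 j}" using ij(4) unfolding D_def .
      show "P1 i \<in> {x, y, z}" "Q1 i \<in> {x, y, z}" "P1 j \<in> {x, y, z}" "Q1 j \<in> {x, y, z}"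
        using PQi PQj unfolding S_def by simp_all
      have r1: "reach (snd (T i) - {ee i}) (P1 i) (Q1 i)" using PQi by simp
      show "reach F (P1 i) (Q1 i)" by (rule reach_mono[OF r1]) (simp add: F_def)
      have r2: "reach (snd (T j) - {ee j}) (P1 j) (Q1 j)" using PQj by simp
      show "reach F (P1 j) (Q1 j)" by (rule reach_mono[OF r2]) (simp add: F_def)
    qed
    then have connF: "\<forall>u\<in>S. \<forall>v\<in>S. reach F u v" unfolding S_def .
    have edgesF: "\<forall>e\<in>F. \<exists>u v. u \<noteq> v \<and> u \<in> V \<and> v \<in> V \<and> e = {u, v}" using edgesE Fsub by blast
    have Sne: "S \<noteq> {}" unfolding S_def by simp
    obtain VA FA where A: "FA \<subseteq> F" "VA \<subseteq> V" "S \<subseteq> VA" "\<forall>e\<in>FA. e \<subseteq> VA" "is_tree VA FA"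
      using extract_tree[OF finite_subset[OF Fsub finE] edgesF SV Sne connF] by blast
    define Fc where "Fc = {ee i, ee j}"
    have iN: "i \<in> N" and jN: "j \<in> N" using ij(1,2) abcN by blast+
    have FcI: "Fc \<subseteq> I" unfolding Fc_def using eeI[OF iN] eeI[OF jN] by simp
    have "I \<subseteq> E" unfolding I_def induced_edges_def by blast
    then have Fcsub: "Fc \<subseteq> E" using FcI by blast
    obtain pi qi where epi: "pi \<noteq> qi" "pi \<in> S" "qi \<in> S" "ee i = {pi, qi}" using eform[OF ij(1)] by blast
    obtain pj qj where epj: "pj \<noteq> qj" "pj \<in> S" "qj \<in> S" "ee j = {pj, qj}" using eform[OF ij(2)] by blast
    have "ee i \<noteq> ee j" by (rule eeinj[OF iN jN ij(3)])
    have "\<forall>u\<in>{x, y, z}. \<forall>v\<in>{x, y, z}. reach Fc u v"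
    proof (rule pairs_conn[of "reach Fc" pi qi pj qj x y z])
      show "\<And>a. reach Fc a a" by simp
      show "\<And>a b. reach Fc a b \<Longrightarrow> reach Fc b a" by (rule reach_sym)
      show "\<And>a b c. reach Fc a b \<Longrightarrow> reach Fc b c \<Longrightarrow> reach Fc a c" by (rule reach_trans)
      show "pi \<noteq> qi" "pj \<noteq> qj" using epi epj by simp_all
      show "{pi, qi} \<noteq> {pj, qj}" using \<open>ee i \<noteq> ee j\<close> epi(4) epj(4) by simp
      show "pi \<in> {x, y, z}" "qi \<in> {x, y, z}" "pj \<in> {x, y, z}" "qj \<in> {x, y, z}"
        using epi epj unfolding S_def by simp_all
      show "reach Fc pi qi" by (rule reach_edge) (simp add: Fc_def epi(4))
      show "reach Fc pj qj" by (rule reach_edge) (simp add: Fc_def epj(4))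
    qed
    then have connC: "\<forall>u\<in>S. \<forall>v\<in>S. reach Fc u v" unfolding S_def .
    have edgesC: "\<forall>e\<in>Fc. \<exists>u v. u \<noteq> v \<and> u \<in> V \<and> v \<in> V \<and> e = {u, v}" using edgesE Fcsub by blast
    obtain VC FC where C: "FC \<subseteq> Fc" "VC \<subseteq> V" "S \<subseteq> VC" "\<forall>e\<in>FC. e \<subseteq> VC" "is_tree VC FC"
      using extract_tree[OF finite_subset[OF Fcsub finE] edgesC SV Sne connC] by blast
    define T' where "T' m = (if m = i then (VA, FA) else if m = j then (VC, FC) else T m)" for m
    have Ti: "T' i = (VA, FA)" unfolding T'_def by simp
    have Tj: "T' j = (VC, FC)" unfolding T'_def using ij(3) by simp
    have To: "T' m = T m" if "m \<noteq> i" "m \<noteq> j" for m using that unfolding T'_def by simp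
    have FAsub: "FA \<subseteq> snd (T i) \<union> snd (T j)" using A(1) unfolding F_def by blast
    have "ee i \<in> snd (T i)" "ee j \<in> snd (T j)" using eeT[OF iN] eeT[OF jN] .
    then have FCsub: "FC \<subseteq> snd (T i) \<union> snd (T j)" using C(1) unfolding Fc_def by blast
    have FAC: "FA \<inter> FC = {}" using A(1) C(1) FI FcI by blast
    have Uij: "snd (T' m) \<subseteq> snd (T i) \<union> snd (T j)" if "m \<in> {i, j}" for m
    proof (cases "m = i")
      case True then show ?thesis using Ti FAsub by simp
    next
      case False then have "m = j" using that by simp
      then show ?thesis using Tj FCsub by simp
    qed
    have "edge_disjoint_S_trees V E S k T'"
      unfolding edge_disjoint_S_trees_def
    proof (intro conjI allI impI)
      fix m assume m: "m < k"
      show "S_tree V E S (T' m)"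
      proof (cases "m = i")
        case True
        have "FA \<subseteq> E" using A(1) Fsub by blast
        then show ?thesis using A(2-5) unfolding True Ti S_tree_def is_subgraph_def by simp
      next
        case False
        show ?thesis
        proof (cases "m = j")
          case True
          have "FC \<subseteq> E" using C(1) Fcsub by blast
          then show ?thesis using C(2-5) unfolding True Tj S_tree_def is_subgraph_def by simp
        next
          case False2: False
          then show ?thesis using trees[OF m] To[OF False False2] by simp
        qed
      qed
    next
      fix m m' assume m: "m < k" and m': "m' < k" and mm: "m \<noteq> m'"
      have other: "snd (T n) \<inter> (snd (T i) \<union> snd (T j)) = {}" if "n < k" "n \<noteq> i" "n \<noteq> j" for n
        using disj[OF that(1) ik that(2)] disj[OF that(1) jk that(3)] by (simp add: Int_Un_distrib)
      show "snd (T' m) \<inter> snd (T' m') = {}"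
      proof (cases "m \<in> {i, j}")
        case True
        show ?thesis
        proof (cases "m' \<in> {i, j}")
          case True2: True
          then have "(m = i \<and> m' = j) \<or> (m = j \<and> m' = i)" using True mm by auto
          then show ?thesis
          proof
            assume "m = i \<and> m' = j" then show ?thesis using Ti Tj FAC by simp
          next
            assume "m = j \<and> m' = i" then show ?thesis using Ti Tj FAC by (simp add: Int_commute)
          qed
        next
          case False
          then have m'o: "m' \<noteq> i" "m' \<noteq> j" by simp_all
          have "snd (T' m') = snd (T m')" using To[OF m'o] by simp
          then show ?thesis using other[OF m' m'o] Uij[OF True] by blast
        qed
      next
        case False
        then have mo: "m \<noteq> i" "m \<noteq> j" by simp_all
        show ?thesis
        proof (cases "m' \<in> {i, j}")
          case True
          have "snd (T' m) = snd (T m)" using To[OF mo] by simp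
          then show ?thesis using other[OF m mo] Uij[OF True] by blast
        next
          case False2: False
          then have m'o: "m' \<noteq> i" "m' \<noteq> j" by simp_all
          then show ?thesis using disj[OF m m' mm] To[OF mo] To[OF m'o] by simp
        qed
      qed
    qed
    moreover have "card {m. m < k \<and> snd (T' m) \<inter> I \<noteq> {}} \<le> 2"
    proof -
      have sub: "{m. m < k \<and> snd (T' m) \<inter> I \<noteq> {}} \<subseteq> {a, b, c} - {i}"
      proof
        fix m assume m: "m \<in> {m. m < k \<and> snd (T' m) \<inter> I \<noteq> {}}"
        have mi: "m \<noteq> i"
        proof
          assume "m = i"
          then have "snd (T' m) \<inter> I = {}" using Ti FI A(1) by auto
          then show False using m by simp
        qed
        moreover have "m \<in> {a, b, c}"
        proof (cases "m = j")
          case True then show ?thesis using ij(2) by simp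
        next
          case False
          then have "snd (T m) \<inter> I \<noteq> {}" using m To[OF mi False] by simp
          then have "m \<in> N" using m unfolding N_def by simp
          then show ?thesis using NA by blast
        qed
        ultimately show "m \<in> {a, b, c} - {i}" by simp
      qed
      have "card {a, b, c} = 3" using b(2) c(2) c(3) by simp
      then have "card ({a, b, c} - {i}) = 2" using ij(1) by (simp add: card_Diff_singleton)
      moreover have "card {m. m < k \<and> snd (T' m) \<inter> I \<noteq> {}} \<le> card ({a, b, c} - {i})"
        by (rule card_mono[OF _ sub]) simp
      ultimately show ?thesis by simp
    qed
    ultimately show ?thesis by (intro exI[of _ T'] conjI)
  qed
  then obtain T' where "edge_disjoint_S_trees V E S k T'" "card {i. i < k \<and> snd (T' i) \<inter> I \<noteq> {}} \<le> 2"
    by blast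
  from reorder[OF this] show ?thesis unfolding S_def I_def .
qed

end
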